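(* Let $P$ be a finite self-dual poset admitting an order-reversing involution $\kappa:P\to P$. For $I\in\mathcal J(P)$ let $I'$ be the order ideal generated by $\kappa(\max(I))$. Let $I\in\mathcal J(P)$ and $\ell\in P$, and for a rowmotion orbit $\mathcal O$ write $(\chi_\ell-\chi_{\kappa(\ell)})(\mathcal O)=\sum_{J\in\mathcal O}(\chi_\ell(J)-\chi_{\kappa(\ell)}(J))$. (1) If $I,I'\in\mathcal O$ for some rowmotion orbit $\mathcal O$, then $(\chi_\ell-\chi_{\kappa(\ell)})(\mathcal O)=0$. (2) If $I\in\mathcal O$ and $I'\in\mathcal O'$ for rowmotion orbits $\mathcal O\neq\mathcal O'$, then $\#\mathcal O=\#\mathcal O'$ and $(\chi_\ell-\chi_{\kappa(\ell)})(\mathcal O)+(\chi_\ell-\chi_{\kappa(\ell)})(\mathcal O')=0$.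
   Context: $\mathcal J(P)$ is the set of order ideals of $P$; rowmotion $\rho:\mathcal J(P)\to\mathcal J(P)$ sends $I$ to the order ideal generated by $\min(P\setminus I)$, and a rowmotion orbit is an orbit of $\rho$. For $q\in P$, $\chi_q(I)=1$ if $q\in\max(I)$ and $0$ otherwise. *)

theory Defs
  imports Main
begin

text \<open>The finite poset P is modelled as a finite type with a partial order; P = UNIV.\<close>

definition order_ideals :: "('a::order) set set" where
  "order_ideals = {I. \<forall>x y. y \<in> I \<longrightarrow> x \<le> y \<longrightarrow> x \<in> I}"

definition maxs :: "('a::order) set \<Rightarrow> 'a set" where
  "maxs S = {x \<in> S. \<forall>y\<in>S. x \<le> y \<longrightarrow> y = x}"

definition mins :: "('a::order) set \<Rightarrow> 'a set" where
  "mins S = {x \<in> S. \<forall>y\<in>S. y \<le> x \<longrightarrow> y = x}"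

definition ideal_gen :: "('a::order) set \<Rightarrow> 'a set" where
  "ideal_gen S = {x. \<exists>y\<in>S. x \<le> y}"

definition rowmotion :: "('a::order) set \<Rightarrow> 'a set" where
  "rowmotion I = ideal_gen (mins (UNIV - I))"

definition rm_orbit_of :: "('a::order) set \<Rightarrow> 'a set set" where
  "rm_orbit_of I = {(rowmotion ^^ n) I | n. True}"

definition is_rm_orbit :: "('a::order) set set \<Rightarrow> bool" where
  "is_rm_orbit Orb \<longleftrightarrow> (\<exists>I\<in>order_ideals. Orb = rm_orbit_of I)"

definition chi :: "('a::order) \<Rightarrow> 'a set \<Rightarrow> int" where
  "chi q I = (if q \<in> maxs I then 1 else 0)"

definition chi_diff_sum :: "('a::order) \<Rightarrow> 'a \<Rightarrow> 'a set set \<Rightarrow> int" where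
  "chi_diff_sum l l' Orb = (\<Sum>J\<in>Orb. chi l J - chi l' J)"

end

theory Submission
  imports Defs
begin

definition upset :: "('a::order) set \<Rightarrow> 'a set" where
  "upset S = {x. \<exists>y\<in>S. y \<le> x}"

definition rinv :: "('a::order) set \<Rightarrow> 'a set" where
  "rinv J = UNIV - upset (maxs J)"

definition antichain :: "('a::order) set \<Rightarrow> bool" where
  "antichain A \<longleftrightarrow> (\<forall>x\<in>A. \<forall>y\<in>A. x \<le> y \<longrightarrow> x = y)"

lemma ideal_gen_ideal: "ideal_gen S \<in> order_ideals"
  unfolding ideal_gen_def order_ideals_def using order_trans by blast

lemma rowmotion_ideal: "rowmotion I \<in> order_ideals"
  by (simp add: rowmotion_def ideal_gen_ideal)

lemma rinv_ideal: "rinv J \<in> order_ideals"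
  unfolding rinv_def upset_def order_ideals_def using order_trans by blast

lemma antichain_maxs: "antichain (maxs S)"
  unfolding antichain_def maxs_def by auto

lemma antichain_mins: "antichain (mins S)"
  unfolding antichain_def mins_def by auto

lemma maxs_gen: "antichain A \<Longrightarrow> maxs (ideal_gen A) = A"
  unfolding antichain_def maxs_def ideal_gen_def
  by (auto intro: order_trans dest: antisym)

lemma mins_up: "antichain A \<Longrightarrow> mins (upset A) = A"
  unfolding antichain_def mins_def upset_def
  by (auto intro: order_trans dest: antisym)

lemma gen_maxs:
  assumes "I \<in> order_ideals"
  shows "ideal_gen (maxs (I::'a::{order,finite} set)) = I"
proof
  show "ideal_gen (maxs I) \<subseteq> I"
    using assms unfolding ideal_gen_def maxs_def order_ideals_def by blast
  show "I \<subseteq> ideal_gen (maxs I)"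
  proof
    fix x assume "x \<in> I"
    then obtain m where "m \<in> I" "x \<le> m" "\<forall>b\<in>I. m \<le> b \<longrightarrow> m = b"
      using finite_has_maximal2[of I x] by auto
    then show "x \<in> ideal_gen (maxs I)"
      unfolding ideal_gen_def maxs_def by auto
  qed
qed

lemma up_mins:
  assumes "I \<in> order_ideals"
  shows "upset (mins (UNIV - (I::'a::{order,finite} set))) = UNIV - I"
proof
  show "upset (mins (UNIV - I)) \<subseteq> UNIV - I"
    using assms unfolding upset_def mins_def order_ideals_def by blast
  show "UNIV - I \<subseteq> upset (mins (UNIV - I))"
  proof
    fix x assume "x \<in> UNIV - I"
    then obtain m where "m \<in> UNIV - I" "m \<le> x" "\<forall>b\<in>UNIV - I. b \<le> m \<longrightarrow> m = b"
      using finite_has_minimal2[of "UNIV - I" x] by auto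
    then show "x \<in> upset (mins (UNIV - I))"
      unfolding upset_def mins_def by auto
  qed
qed

lemma rinv_rho:
  assumes "(I::'a::{order,finite} set) \<in> order_ideals"
  shows "rinv (rowmotion I) = I"
proof -
  have "maxs (rowmotion I) = mins (UNIV - I)"
    unfolding rowmotion_def by (simp add: maxs_gen antichain_mins)
  then show ?thesis unfolding rinv_def using up_mins[OF assms] by auto
qed

lemma rho_rinv:
  assumes "(J::'a::{order,finite} set) \<in> order_ideals"
  shows "rowmotion (rinv J) = J"
proof -
  have "UNIV - rinv J = upset (maxs J)" unfolding rinv_def by auto
  then have "mins (UNIV - rinv J) = maxs J" by (simp add: mins_up antichain_maxs)
  then show ?thesis unfolding rowmotion_def using gen_maxs[OF assms] by simp
qed

lemma rho_inj:
  assumes "(I::'a::{order,finite} set) \<in> order_ideals" "J \<in> order_ideals"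
    "rowmotion I = rowmotion J"
  shows "I = J"
  using rinv_rho[OF assms(1)] rinv_rho[OF assms(2)] assms(3) by metis

lemma maxs_rho: "maxs (rowmotion X) = mins (UNIV - X)"
  unfolding rowmotion_def by (rule maxs_gen[OF antichain_mins])

lemma pow_ideal: "J \<in> order_ideals \<Longrightarrow> (rowmotion ^^ n) J \<in> order_ideals"
  by (induction n) (auto simp: rowmotion_ideal)

lemma rinv_pow_ideal: "J \<in> order_ideals \<Longrightarrow> (rinv ^^ n) J \<in> order_ideals"
  by (induction n) (auto simp: rinv_ideal)

lemma orbit_iff: "X \<in> rm_orbit_of J \<longleftrightarrow> (\<exists>n. X = (rowmotion ^^ n) J)"
  unfolding rm_orbit_of_def by simp

lemma orbit_trans:
  assumes "X \<in> rm_orbit_of J" shows "rm_orbit_of X \<subseteq> rm_orbit_of J"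
proof
  fix Y assume "Y \<in> rm_orbit_of X"
  then obtain n where n: "Y = (rowmotion ^^ n) X" unfolding orbit_iff by auto
  obtain m where m: "X = (rowmotion ^^ m) J" using assms unfolding orbit_iff by auto
  have "Y = (rowmotion ^^ (n + m)) J" using n m by (simp add: funpow_add)
  then show "Y \<in> rm_orbit_of J" unfolding orbit_iff by (rule exI)
qed

lemma self_in: "J \<in> rm_orbit_of J"
  unfolding orbit_iff by (rule exI[of _ 0]) simp

lemma pow_cancel:
  assumes X: "(X::'a::{order,finite} set) \<in> order_ideals" and Y: "Y \<in> order_ideals"
  shows "(rowmotion ^^ n) X = (rowmotion ^^ n) Y \<Longrightarrow> X = Y"
proof (induction n)
  case 0 then show ?case by simp
next
  case (Suc n)
  have "rowmotion ((rowmotion ^^ n) X) = rowmotion ((rowmotion ^^ n) Y)"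
    using Suc.prems by simp
  then have "(rowmotion ^^ n) X = (rowmotion ^^ n) Y"
    by (rule rho_inj[OF pow_ideal[OF X] pow_ideal[OF Y]])
  then show ?case using Suc.IH by blast
qed

lemma periodic:
  assumes J: "(J::'a::{order,finite} set) \<in> order_ideals"
  shows "\<exists>k>0. (rowmotion ^^ k) J = J"
proof -
  let ?f = "\<lambda>n. (rowmotion ^^ n) J"
  have "\<not> inj ?f"
  proof
    assume "inj ?f"
    have "finite (range ?f)" by simp
    then have "finite (UNIV :: nat set)" using finite_imageD[OF _ \<open>inj ?f\<close>] by blast
    then show False by simp
  qed
  then obtain i j where ij: "i \<noteq> j" "?f i = ?f j" unfolding inj_def by blast
  have gen: "\<exists>k>0. (rowmotion ^^ k) J = J" if "a < b" "?f a = ?f b" for a b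
  proof -
    have "(rowmotion ^^ (a + (b - a))) J = (rowmotion ^^ a) ((rowmotion ^^ (b - a)) J)"
      by (simp only: funpow_add o_apply)
    then have "(rowmotion ^^ a) ((rowmotion ^^ (b - a)) J) = (rowmotion ^^ a) J"
      using that by simp
    then have "(rowmotion ^^ (b - a)) J = J"
      using pow_cancel[OF pow_ideal[OF J] J] by blast
    then show ?thesis using that(1) by (intro exI[of _ "b - a"]) simp
  qed
  show ?thesis
  proof (cases "i < j")
    case True then show ?thesis using gen ij by blast
  next
    case False
    then have "j < i" using ij by auto
    then show ?thesis using gen ij by metis
  qed
qed

lemma rinv_in:
  assumes J: "(J::'a::{order,finite} set) \<in> order_ideals"
  shows "rinv J \<in> rm_orbit_of J"
proof -
  obtain k where k: "k > 0" "(rowmotion ^^ k) J = J" using periodic[OF J] by blast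
  then obtain k' where k': "k = Suc k'" by (cases k) auto
  have "rowmotion ((rowmotion ^^ k') J) = rowmotion (rinv J)"
    using k k' rho_rinv[OF J] by simp
  then have "(rowmotion ^^ k') J = rinv J"
    using rho_inj[OF pow_ideal[OF J] rinv_ideal] by blast
  then show ?thesis unfolding orbit_iff by (metis)
qed

lemma rinv_pow_in:
  assumes J: "(J::'a::{order,finite} set) \<in> order_ideals"
  shows "(rinv ^^ n) J \<in> rm_orbit_of J"
proof (induction n)
  case 0 then show ?case by (simp add: self_in)
next
  case (Suc n)
  have "rinv ((rinv ^^ n) J) \<in> rm_orbit_of ((rinv ^^ n) J)"
    using rinv_in[OF rinv_pow_ideal[OF J]] .
  then show ?case using orbit_trans[OF Suc.IH] by auto
qed

lemma rinv_pow_rho_pow: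
  assumes J: "(J::'a::{order,finite} set) \<in> order_ideals"
  shows "(rinv ^^ m) ((rowmotion ^^ m) J) = J"
proof (induction m)
  case 0 then show ?case by simp
next
  case (Suc m)
  have e1: "(rinv ^^ Suc m) X = (rinv ^^ m) (rinv X)" for X
    by (simp only: funpow_Suc_right o_apply)
  have e2: "(rowmotion ^^ Suc m) J = rowmotion ((rowmotion ^^ m) J)" by simp
  have "rinv (rowmotion ((rowmotion ^^ m) J)) = (rowmotion ^^ m) J"
    using rinv_rho[OF pow_ideal[OF J]] by blast
  then have "(rinv ^^ Suc m) ((rowmotion ^^ Suc m) J) = (rinv ^^ m) ((rowmotion ^^ m) J)"
    by (simp only: e1 e2)
  then show ?case using Suc.IH by simp
qed

lemma orbit_eq:
  assumes J: "(J::'a::{order,finite} set) \<in> order_ideals" and X: "X \<in> rm_orbit_of J"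
  shows "rm_orbit_of X = rm_orbit_of J"
proof
  show "rm_orbit_of X \<subseteq> rm_orbit_of J" using orbit_trans[OF X] .
  obtain m where m: "X = (rowmotion ^^ m) J" using X unfolding orbit_iff by auto
  have "J \<in> rm_orbit_of X"
    using rinv_pow_in[OF pow_ideal[OF J], of m m] rinv_pow_rho_pow[OF J, of m] m by simp
  then show "rm_orbit_of J \<subseteq> rm_orbit_of X" using orbit_trans by blast
qed

lemma orbit_ideals:
  "J \<in> order_ideals \<Longrightarrow> X \<in> rm_orbit_of J \<Longrightarrow> X \<in> order_ideals"
  unfolding orbit_iff using pow_ideal by auto

locale kinv =
  fixes \<kappa> :: "'a::{order,finite} \<Rightarrow> 'a"
  assumes invol: "\<And>x. \<kappa> (\<kappa> x) = x"
    and rev: "\<And>x y. x \<le> y \<Longrightarrow> \<kappa> y \<le> \<kappa> x"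
begin

definition phi :: "'a set \<Rightarrow> 'a set" where
  "phi J = ideal_gen (\<kappa> ` maxs J)"

lemma rev_iff[simp]: "\<kappa> x \<le> \<kappa> y \<longleftrightarrow> y \<le> x"
  using rev[of "\<kappa> x" "\<kappa> y"] rev[of y x] invol by auto

lemma k_eq[simp]: "\<kappa> x = \<kappa> y \<longleftrightarrow> x = y"
  by (metis invol)

lemma le_k: "x \<le> \<kappa> a \<longleftrightarrow> a \<le> \<kappa> x"
  by (metis rev invol)

lemma img_iff: "x \<in> \<kappa> ` S \<longleftrightarrow> \<kappa> x \<in> S"
  by (metis image_iff invol)

lemma img_img[simp]: "\<kappa> ` \<kappa> ` S = S"
  by (simp add: image_image invol)

lemma anti_img: "antichain A \<Longrightarrow> antichain (\<kappa> ` A)"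
  unfolding antichain_def by auto

lemma maxs_phi: "maxs (phi J) = \<kappa> ` maxs J"
  unfolding phi_def by (simp add: maxs_gen anti_img antichain_maxs)

lemma phi_ideal: "phi J \<in> order_ideals"
  unfolding phi_def by (rule ideal_gen_ideal)

lemma phi_phi: "J \<in> order_ideals \<Longrightarrow> phi (phi J) = J"
proof -
  assume J: "J \<in> order_ideals"
  have "phi (phi J) = ideal_gen (\<kappa> ` \<kappa> ` maxs J)" unfolding phi_def[of "phi J"] maxs_phi ..
  also have "\<dots> = J" using gen_maxs[OF J] by simp
  finally show ?thesis .
qed

lemma chi_phi: "chi l (phi J) = chi (\<kappa> l) J"
  unfolding chi_def by (simp add: maxs_phi img_iff)

lemma mins_img: "mins (\<kappa> ` S) = \<kappa> ` maxs S"
proof -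
  have "x \<in> mins (\<kappa> ` S) \<longleftrightarrow> x \<in> \<kappa> ` maxs S" for x
    unfolding mins_def maxs_def img_iff by (auto simp: img_iff) (metis invol rev_iff)+
  then show ?thesis by blast
qed

lemma compl_phi:
  assumes "I \<in> order_ideals"
  shows "UNIV - phi I = \<kappa> ` rinv I"
proof -
  have key: "x \<notin> phi I \<longleftrightarrow> \<kappa> x \<in> rinv I" for x
  proof -
    have "x \<notin> phi I \<longleftrightarrow> \<not> (\<exists>a\<in>maxs I. x \<le> \<kappa> a)"
      unfolding phi_def ideal_gen_def by auto
    also have "\<dots> \<longleftrightarrow> \<not> (\<exists>a\<in>maxs I. a \<le> \<kappa> x)"
      using le_k by blast
    also have "\<dots> \<longleftrightarrow> \<kappa> x \<in> rinv I"
      unfolding rinv_def upset_def by auto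
    finally show ?thesis .
  qed
  show ?thesis
  proof (rule set_eqI)
    fix x show "x \<in> UNIV - phi I \<longleftrightarrow> x \<in> \<kappa> ` rinv I"
      using key[of x] img_iff[of x "rinv I"] by blast
  qed
qed

lemma phi_rho_phi:
  assumes I: "I \<in> order_ideals"
  shows "phi (rowmotion (phi I)) = rinv I"
proof -
  have "phi (rowmotion (phi I)) = ideal_gen (\<kappa> ` mins (UNIV - phi I))"
    unfolding phi_def[of "rowmotion (phi I)"] maxs_rho ..
  also have "\<dots> = ideal_gen (maxs (rinv I))"
    unfolding compl_phi[OF I] mins_img img_img ..
  also have "\<dots> = rinv I" using gen_maxs[OF rinv_ideal] .
  finally show ?thesis .
qed

lemma phi_rho: "J \<in> order_ideals \<Longrightarrow> phi (rowmotion J) = rinv (phi J)"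
  using phi_rho_phi[OF phi_ideal, of J] phi_phi[of J] by metis

lemma phi_pow: "J \<in> order_ideals \<Longrightarrow> phi ((rowmotion ^^ n) J) = (rinv ^^ n) (phi J)"
proof (induction n)
  case 0 then show ?case by simp
next
  case (Suc n)
  have "phi ((rowmotion ^^ Suc n) J) = phi (rowmotion ((rowmotion ^^ n) J))" by simp
  also have "\<dots> = rinv (phi ((rowmotion ^^ n) J))" using phi_rho[OF pow_ideal[OF Suc.prems]] .
  also have "\<dots> = rinv ((rinv ^^ n) (phi J))" using Suc.IH[OF Suc.prems] by simp
  finally show ?case by simp
qed

lemma phi_orbit:
  assumes I: "I \<in> order_ideals"
  shows "phi ` rm_orbit_of I \<subseteq> rm_orbit_of (phi I)"
proof
  fix Y assume "Y \<in> phi ` rm_orbit_of I"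
  then obtain X where X: "X \<in> rm_orbit_of I" "Y = phi X" by blast
  obtain n where n: "X = (rowmotion ^^ n) I" using X(1) unfolding orbit_iff by blast
  have Yn: "Y = (rinv ^^ n) (phi I)" by (simp only: X(2) n phi_pow[OF I])
  show "Y \<in> rm_orbit_of (phi I)" unfolding Yn by (rule rinv_pow_in[OF phi_ideal])
qed

lemma phi_orbit_eq:
  assumes I: "I \<in> order_ideals"
  shows "phi ` rm_orbit_of I = rm_orbit_of (phi I)"
proof
  show "phi ` rm_orbit_of I \<subseteq> rm_orbit_of (phi I)" using phi_orbit[OF I] .
  show "rm_orbit_of (phi I) \<subseteq> phi ` rm_orbit_of I"
  proof
    fix Y assume Y: "Y \<in> rm_orbit_of (phi I)"
    then have Yi: "Y \<in> order_ideals" using orbit_ideals[OF phi_ideal] by blast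
    have "phi Y \<in> rm_orbit_of (phi (phi I))" using phi_orbit[OF phi_ideal] Y by blast
    then have "phi Y \<in> rm_orbit_of I" using phi_phi[OF I] by simp
    moreover have "Y = phi (phi Y)" using phi_phi[OF Yi] by simp
    ultimately show "Y \<in> phi ` rm_orbit_of I" by blast
  qed
qed

lemma phi_inj:
  assumes I: "I \<in> order_ideals"
  shows "inj_on phi (rm_orbit_of I)"
  by (metis I inj_onI orbit_ideals phi_phi)

lemma sum_phi:
  assumes I: "I \<in> order_ideals"
  shows "chi_diff_sum l (\<kappa> l) (rm_orbit_of (phi I)) = - chi_diff_sum l (\<kappa> l) (rm_orbit_of I)"
proof -
  have "chi_diff_sum l (\<kappa> l) (rm_orbit_of (phi I))
      = (\<Sum>J\<in>phi ` rm_orbit_of I. chi l J - chi (\<kappa> l) J)"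
    unfolding chi_diff_sum_def phi_orbit_eq[OF I] ..
  also have "\<dots> = (\<Sum>J\<in>rm_orbit_of I. chi l (phi J) - chi (\<kappa> l) (phi J))"
    using sum.reindex[OF phi_inj[OF I]] by simp
  also have "\<dots> = (\<Sum>J\<in>rm_orbit_of I. -(chi l J - chi (\<kappa> l) J))"
    by (simp add: chi_phi invol)
  also have "\<dots> = - chi_diff_sum l (\<kappa> l) (rm_orbit_of I)"
    unfolding chi_diff_sum_def by (simp add: sum_subtractf)
  finally show ?thesis .
qed

end

theorem corollary5p14:
  fixes \<kappa> :: "'a::{order,finite} \<Rightarrow> 'a"
    and I :: "'a set" and l :: 'a
  assumes invol: "\<And>x. \<kappa> (\<kappa> x) = x"
    and rev: "\<And>x y. x \<le> y \<Longrightarrow> \<kappa> y \<le> \<kappa> x"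
    and I: "I \<in> order_ideals"
  shows "(\<forall>Orb. is_rm_orbit Orb \<longrightarrow> I \<in> Orb \<longrightarrow> ideal_gen (\<kappa> ` maxs I) \<in> Orb
            \<longrightarrow> chi_diff_sum l (\<kappa> l) Orb = 0)
       \<and> (\<forall>Orb Orb'. is_rm_orbit Orb \<longrightarrow> is_rm_orbit Orb' \<longrightarrow> I \<in> Orb
            \<longrightarrow> ideal_gen (\<kappa> ` maxs I) \<in> Orb' \<longrightarrow> Orb \<noteq> Orb'
            \<longrightarrow> card Orb = card Orb' \<and> chi_diff_sum l (\<kappa> l) Orb + chi_diff_sum l (\<kappa> l) Orb' = 0)"
proof -
  interpret kinv \<kappa> using invol rev by unfold_locales auto
  have pI: "ideal_gen (\<kappa> ` maxs I) = phi I" by (simp add: phi_def)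
  have oeq: "Orb = rm_orbit_of X" if h: "is_rm_orbit Orb" "X \<in> Orb" for Orb and X :: "'a set"
  proof -
    obtain J where J: "J \<in> order_ideals" "Orb = rm_orbit_of J"
      using h(1) unfolding is_rm_orbit_def by blast
    show ?thesis using orbit_eq[OF J(1)] J(2) h(2) by simp
  qed
  have S: "chi_diff_sum l (\<kappa> l) (rm_orbit_of (phi I)) = - chi_diff_sum l (\<kappa> l) (rm_orbit_of I)"
    using sum_phi[OF I] .
  have C: "card (rm_orbit_of (phi I)) = card (rm_orbit_of I)"
    using card_image[OF phi_inj[OF I]] phi_orbit_eq[OF I] by simp
  show ?thesis
  proof (intro conjI allI impI)
    fix Orb assume "is_rm_orbit Orb" "I \<in> Orb" "ideal_gen (\<kappa> ` maxs I) \<in> Orb"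
    then have "Orb = rm_orbit_of I" "Orb = rm_orbit_of (phi I)" using oeq pI by auto
    then show "chi_diff_sum l (\<kappa> l) Orb = 0" using S by simp
  next
    fix Orb Orb' assume "is_rm_orbit Orb" "is_rm_orbit Orb'" "I \<in> Orb"
      "ideal_gen (\<kappa> ` maxs I) \<in> Orb'"
    then have "Orb = rm_orbit_of I" "Orb' = rm_orbit_of (phi I)" using oeq pI by auto
    then show "card Orb = card Orb'"
      "chi_diff_sum l (\<kappa> l) Orb + chi_diff_sum l (\<kappa> l) Orb' = 0" using S C by auto
  qed
qed

end
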